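(* Assume $\mu$ is such that $\overline N=\sum_{N\ge0}N\lambda_{N,\mu}\in\mathbb{N}$. Then $$F(\overline N)\ge F_{\mathrm{gc}}(\mu)\ge F(\overline N)-\ln(1+\overline N)-1.$$
   Context: Fix a nondecreasing sequence $(E_j)_{j\ge0}$ of nonnegative reals. A configuration is a sequence $n=(n_0,n_1,\dots)$ of nonnegative integers with finitely many nonzero entries; $|n|=\sum_jn_j$ and $E(n)=\sum_jE_jn_j$. The canonical partition function is $Z(N)=\sum_{|n|=N}e^{-E(n)}$ and the canonical free energy is $F(N)=-\ln Z(N)$. The grand canonical partition function is $Z_{\mathrm{gc}}(\mu)=\sum_ne^{-(E(n)-\mu|n|)}$ (assumed finite, as are all $Z(N)$), $\lambda_{N,\mu}=Z(N)e^{\mu N}/Z_{\mathrm{gc}}(\mu)$, and the grand canonical free energy is $F_{\mathrm{gc}}(\mu)=\sum_{N\ge0}\lambda_{N,\mu}F(N)-S(\lambda)$ with $S(\lambda)=-\sum_{N\ge0}\lambda_{N,\mu}\ln\lambda_{N,\mu}$. *)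

theory Defs
  imports "HOL-Analysis.Analysis"
begin

text \<open>Configurations: finitely supported occupation sequences.\<close>
definition configs :: "(nat \<Rightarrow> nat) set" where
  "configs = {n. finite {j. n j \<noteq> 0}}"

definition cnum :: "(nat \<Rightarrow> nat) \<Rightarrow> nat" where
  "cnum n = (\<Sum>j\<in>{j. n j \<noteq> 0}. n j)"

definition cenergy :: "(nat \<Rightarrow> real) \<Rightarrow> (nat \<Rightarrow> nat) \<Rightarrow> real" where
  "cenergy E n = (\<Sum>j\<in>{j. n j \<noteq> 0}. E j * real (n j))"

definition Zc :: "(nat \<Rightarrow> real) \<Rightarrow> nat \<Rightarrow> real" where
  "Zc E N = infsum (\<lambda>n. exp (- cenergy E n)) {n \<in> configs. cnum n = N}"

definition Fc :: "(nat \<Rightarrow> real) \<Rightarrow> nat \<Rightarrow> real" where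
  "Fc E N = - ln (Zc E N)"

definition Zgc :: "(nat \<Rightarrow> real) \<Rightarrow> real \<Rightarrow> real" where
  "Zgc E \<mu> = infsum (\<lambda>n. exp (- (cenergy E n - \<mu> * real (cnum n)))) configs"

definition lam :: "(nat \<Rightarrow> real) \<Rightarrow> real \<Rightarrow> nat \<Rightarrow> real" where
  "lam E \<mu> N = Zc E N * exp (\<mu> * real N) / Zgc E \<mu>"

definition entropy :: "(nat \<Rightarrow> real) \<Rightarrow> real \<Rightarrow> real" where
  "entropy E \<mu> = - (\<Sum>N. lam E \<mu> N * ln (lam E \<mu> N))"

definition Fgc :: "(nat \<Rightarrow> real) \<Rightarrow> real \<Rightarrow> real" where
  "Fgc E \<mu> = (\<Sum>N. lam E \<mu> N * Fc E N) - entropy E \<mu>"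

end

theory Submission
  imports Defs
begin


lemma cnum_eq: "finite S \<Longrightarrow> {j. n j \<noteq> 0} \<subseteq> S \<Longrightarrow> cnum n = sum n S"
  unfolding cnum_def by (rule sum.mono_neutral_left) auto

lemma cenergy_eq: "finite S \<Longrightarrow> {j. n j \<noteq> 0} \<subseteq> S \<Longrightarrow> cenergy E n = (\<Sum>j\<in>S. E j * real (n j))"
  unfolding cenergy_def by (rule sum.mono_neutral_left) auto

definition CJ :: "nat \<Rightarrow> nat \<Rightarrow> (nat \<Rightarrow> nat) set" where
  "CJ J N = {n. (\<forall>j\<ge>J. n j = 0) \<and> sum n {..<J} = N}"

definition WJ :: "(nat \<Rightarrow> real) \<Rightarrow> nat \<Rightarrow> nat \<Rightarrow> real" where
  "WJ E J N = (\<Sum>n\<in>CJ J N. exp (- cenergy E n))"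

lemma CJ_supp: "n \<in> CJ J N \<Longrightarrow> {j. n j \<noteq> 0} \<subseteq> {..<J}"
  unfolding CJ_def by (auto simp: not_less[symmetric])

lemma CJ_0: "CJ 0 N = (if N = 0 then {\<lambda>_. 0} else {})"
  unfolding CJ_def by auto

lemma CJ_Suc: "CJ (Suc J) N = (\<Union>k\<in>{..N}. (\<lambda>m. m(J:=k)) ` CJ J (N-k))"
proof (intro equalityI subsetI)
  fix n assume n: "n \<in> CJ (Suc J) N"
  let ?k = "n J" and ?m = "n(J:=0)"
  have s: "sum n {..<Suc J} = N" using n by (simp add: CJ_def)
  have "sum ?m {..<J} = sum n {..<J}" by (rule sum.cong) auto
  hence "sum ?m {..<J} = N - ?k" using s by simp
  moreover have "\<forall>j\<ge>J. ?m j = 0" using n by (auto simp: CJ_def)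
  ultimately have "?m \<in> CJ J (N - ?k)" by (simp add: CJ_def)
  moreover have "?k \<le> N" using s by simp
  moreover have "n = ?m(J:=?k)" by simp
  ultimately show "n \<in> (\<Union>k\<in>{..N}. (\<lambda>m. m(J:=k)) ` CJ J (N-k))" by blast
next
  fix n assume "n \<in> (\<Union>k\<in>{..N}. (\<lambda>m. m(J:=k)) ` CJ J (N-k))"
  then obtain k m where k: "k \<le> N" and m: "m \<in> CJ J (N-k)" and nd: "n = m(J:=k)" by auto
  have "sum n {..<J} = sum m {..<J}" unfolding nd by (rule sum.cong) auto
  hence "sum n {..<Suc J} = N" using k m nd by (simp add: CJ_def)
  moreover have "\<forall>j\<ge>Suc J. n j = 0" using m nd by (auto simp: CJ_def)
  ultimately show "n \<in> CJ (Suc J) N" by (simp add: CJ_def)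
qed

lemma CJ_finite: "finite (CJ J N)"
proof (induction J arbitrary: N)
  case 0 thus ?case by (simp add: CJ_0)
next
  case (Suc J) thus ?case by (simp add: CJ_Suc)
qed

lemma CJ_zero: "m \<in> CJ J N \<Longrightarrow> m J = 0"
  by (simp add: CJ_def)

lemma WJ_0: "WJ E 0 N = (if N = 0 then 1 else 0)"
  by (simp add: WJ_def CJ_0 cenergy_def)

lemma WJ_Suc: "WJ E (Suc J) N = (\<Sum>k\<le>N. exp (- E J) ^ k * WJ E J (N-k))"
proof -
  have disj: "disjoint_family_on (\<lambda>k. (\<lambda>m. m(J:=k)) ` CJ J (N-k)) {..N}"
  proof (unfold disjoint_family_on_def, intro ballI impI equalityI subsetI)
    fix a b x assume "a \<noteq> b" and x: "x \<in> (\<lambda>m. m(J:=a)) ` CJ J (N-a) \<inter> (\<lambda>m. m(J:=b)) ` CJ J (N-b)"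
    from x obtain m1 m2 where e1: "x = m1(J:=a)" and e2: "x = m2(J:=b)" by blast
    have "x J = a" unfolding e1 by simp
    moreover have "x J = b" unfolding e2 by simp
    ultimately have "a = b" by simp
    with \<open>a \<noteq> b\<close> show "x \<in> {}" by blast
  qed simp
  have "WJ E (Suc J) N = (\<Sum>k\<le>N. \<Sum>n\<in>(\<lambda>m. m(J:=k)) ` CJ J (N-k). exp (- cenergy E n))"
    unfolding WJ_def CJ_Suc
    apply (rule sum.UNION_disjoint)
      apply simp
     apply (simp add: CJ_finite)
    using disj unfolding disjoint_family_on_def by blast
  also have "\<dots> = (\<Sum>k\<le>N. exp (- E J) ^ k * WJ E J (N-k))"
  proof (rule sum.cong[OF refl])
    fix k assume k: "k \<in> {..N}"
    have inj: "inj_on (\<lambda>m. m(J:=k)) (CJ J (N-k))"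
    proof (rule inj_onI)
      fix a b assume a: "a \<in> CJ J (N-k)" and b: "b \<in> CJ J (N-k)" and e: "a(J:=k) = b(J:=k)"
      show "a = b"
      proof
        fix j show "a j = b j"
          using fun_cong[OF e, of j] CJ_zero[OF a] CJ_zero[OF b] by (cases "j = J") auto
      qed
    qed
    have "(\<Sum>n\<in>(\<lambda>m. m(J:=k)) ` CJ J (N-k). exp (- cenergy E n))
        = (\<Sum>m\<in>CJ J (N-k). exp (- cenergy E (m(J:=k))))"
      by (subst sum.reindex[OF inj]) simp
    also have "\<dots> = (\<Sum>m\<in>CJ J (N-k). exp (- E J) ^ k * exp (- cenergy E m))"
    proof (rule sum.cong[OF refl])
      fix m assume m: "m \<in> CJ J (N-k)"
      have s1: "{j. (m(J:=k)) j \<noteq> 0} \<subseteq> {..<Suc J}" using CJ_supp[OF m] by auto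
      have "cenergy E (m(J:=k)) = (\<Sum>j<Suc J. E j * real ((m(J:=k)) j))"
        by (rule cenergy_eq[OF _ s1]) simp
      also have "\<dots> = (\<Sum>j<J. E j * real ((m(J:=k)) j)) + E J * real k"
        by (simp only: sum.lessThan_Suc fun_upd_same)
      also have "(\<Sum>j<J. E j * real ((m(J:=k)) j)) = (\<Sum>j<J. E j * real (m j))"
        by (rule sum.cong) auto
      also have "(\<Sum>j<J. E j * real (m j)) = cenergy E m"
        by (rule cenergy_eq[OF _ CJ_supp[OF m], symmetric]) simp
      finally have eq: "cenergy E (m(J:=k)) = cenergy E m + E J * real k" .
      have "exp (- (cenergy E m + E J * real k)) = exp (real k * (- E J)) * exp (- cenergy E m)"
        by (simp add: exp_add[symmetric] algebra_simps)
      thus "exp (- cenergy E (m(J:=k))) = exp (- E J) ^ k * exp (- cenergy E m)"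
        unfolding eq exp_of_nat_mult[symmetric] by simp
    qed
    also have "\<dots> = exp (- E J) ^ k * WJ E J (N-k)"
      by (simp add: WJ_def sum_distrib_left)
    finally show "(\<Sum>n\<in>(\<lambda>m. m(J:=k)) ` CJ J (N-k). exp (- cenergy E n)) = exp (- E J) ^ k * WJ E J (N-k)" .
  qed
  finally show ?thesis .
qed




lemma conv_lc:
  fixes a :: "nat \<Rightarrow> real" and x :: real
  assumes pos: "\<And>n. a n > 0" and lc: "\<And>n. a n * a (n+2) \<le> a (n+1)^2" and x: "x > 0"
  defines "b \<equiv> \<lambda>N. \<Sum>k\<le>N. x^k * a (N-k)"
  shows "\<forall>n. b n > 0" and "\<forall>n. b n * b (n+2) \<le> b (n+1)^2"
proof -
  show bpos: "\<forall>n. b n > 0"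
  proof
    fix n show "b n > 0" unfolding b_def
      by (rule sum_pos) (use pos x in auto)
  qed
  have rec: "b (Suc N) = a (Suc N) + x * b N" for N
  proof -
    have "b (Suc N) = x^0 * a (Suc N - 0) + (\<Sum>k\<le>N. x^(Suc k) * a (Suc N - Suc k))"
      unfolding b_def by (rule sum.atMost_Suc_shift)
    also have "(\<Sum>k\<le>N. x^(Suc k) * a (Suc N - Suc k)) = x * b N"
      unfolding b_def sum_distrib_left by (rule sum.cong) auto
    finally show ?thesis by simp
  qed
  define r where "r n = a (Suc n) / a n" for n
  have "decseq r"
  proof (rule decseq_SucI)
    fix n
    have "a n * a (n+2) \<le> a (n+1) * a (n+1)" using lc[of n] by (simp add: power2_eq_square)
    hence "a (Suc (Suc n)) / a (Suc n) \<le> a (Suc n) / a n"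
      using pos[of n] pos[of "Suc n"] by (simp add: divide_simps mult.commute)
    thus "r (Suc n) \<le> r n" by (simp add: r_def)
  qed
  hence key: "a i * a (N+2) \<le> a (i+1) * a (N+1)" if "i \<le> N+1" for i N
  proof -
    have "r (N+1) \<le> r i" using \<open>decseq r\<close> that by (simp add: decseq_def)
    hence "a (N+2) / a (N+1) \<le> a (i+1) / a i" by (simp add: r_def)
    thus ?thesis using pos[of i] pos[of "N+1"] by (simp add: divide_simps mult.commute)
  qed
  show "\<forall>n. b n * b (n+2) \<le> b (n+1)^2"
  proof
    fix N
    have "b N * a (N+2) = (\<Sum>k\<le>N. x^k * (a (N-k) * a (N+2)))"
      unfolding b_def sum_distrib_right by (simp add: mult.assoc)
    also have "\<dots> \<le> (\<Sum>k\<le>N. x^k * (a (N+1-k) * a (N+1)))"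
    proof (rule sum_mono)
      fix k assume "k \<in> {..N}"
      hence "a (N-k) * a (N+2) \<le> a (N-k+1) * a (N+1)" by (intro key) auto
      moreover have "N-k+1 = N+1-k" using \<open>k \<in> {..N}\<close> by auto
      ultimately show "x^k * (a (N-k) * a (N+2)) \<le> x^k * (a (N+1-k) * a (N+1))"
        using x by (intro mult_left_mono) auto
    qed
    also have "\<dots> \<le> (\<Sum>k\<le>Suc N. x^k * (a (N+1-k) * a (N+1)))"
      using x pos[of 0] pos[of "Suc N"] by (simp add: sum.atMost_Suc less_imp_le)
    also have "\<dots> = b (N+1) * a (N+1)"
      unfolding b_def sum_distrib_right by (simp add: mult.assoc)
    finally have ineq: "b N * a (N+2) \<le> b (N+1) * a (N+1)" .
    have e1: "b (N+2) = a (N+2) + x * b (N+1)" using rec[of "N+1"] by simp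
    have e2: "b (N+1) = a (N+1) + x * b N" using rec[of N] by simp
    have "b N * b (N+2) = b N * a (N+2) + x * (b N * b (N+1))" unfolding e1 by (simp add: algebra_simps)
    also have "b (N+1)^2 = b (N+1) * a (N+1) + x * (b N * b (N+1))"
      by (subst power2_eq_square, subst (2) e2) (simp add: algebra_simps)
    ultimately show "b N * b (N+2) \<le> b (N+1)^2" using ineq by linarith
  qed
qed




lemma WJ_1: "WJ E (Suc 0) n = exp (- E 0) ^ n"
proof -
  have "WJ E (Suc 0) n = (\<Sum>k\<le>n. if k = n then exp (- E 0) ^ k else 0)"
    unfolding WJ_Suc WJ_0 by (rule sum.cong) auto
  thus ?thesis by simp
qed

lemma WJ_good: "(\<forall>n. WJ E (Suc J) n > 0) \<and> (\<forall>n. WJ E (Suc J) n * WJ E (Suc J) (n+2) \<le> WJ E (Suc J) (n+1)^2)"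
proof (induction J)
  case 0
  show ?case by (simp add: WJ_1 power2_eq_square power_add)
next
  case (Suc J)
  have eq: "WJ E (Suc (Suc J)) = (\<lambda>N. \<Sum>k\<le>N. exp (- E (Suc J))^k * WJ E (Suc J) (N-k))"
    by (rule ext) (rule WJ_Suc)
  show ?case unfolding eq
    using conv_lc[of "WJ E (Suc J)" "exp (- E (Suc J))"] Suc by auto
qed

definition AN :: "nat \<Rightarrow> (nat \<Rightarrow> nat) set" where
  "AN N = {n \<in> configs. cnum n = N}"

lemma CJ_sub: "CJ J N \<subseteq> AN N"
proof
  fix n assume n: "n \<in> CJ J N"
  have "finite {j. n j \<noteq> 0}" using CJ_supp[OF n] finite_subset by blast
  moreover have "cnum n = N" using cnum_eq[OF _ CJ_supp[OF n]] n by (simp add: CJ_def)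
  ultimately show "n \<in> AN N" by (simp add: AN_def configs_def)
qed

lemma WJ_le:
  assumes "(\<lambda>n. exp (- cenergy E n)) summable_on AN N"
  shows "WJ E J N \<le> Zc E N"
proof -
  have "((\<lambda>n. exp (- cenergy E n)) has_sum Zc E N) (AN N)"
    using assms by (simp add: Zc_def AN_def)
  moreover have "((\<lambda>n. exp (- cenergy E n)) has_sum WJ E J N) (CJ J N)"
    unfolding WJ_def by (rule has_sum_finite[OF CJ_finite])
  ultimately show ?thesis
    using has_sum_mono_neutral[where f="\<lambda>n. exp (- cenergy E n)" and a="WJ E J N" and A="CJ J N" and g="\<lambda>n. exp (- cenergy E n)" and b="Zc E N" and B="AN N"]
      CJ_sub by auto
qed

lemma WJ_lim:
  assumes "(\<lambda>n. exp (- cenergy E n)) summable_on AN N"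
  shows "(\<lambda>J. WJ E J N) \<longlonglongrightarrow> Zc E N"
proof (rule LIMSEQ_I)
  fix r :: real assume r: "r > 0"
  let ?f = "\<lambda>n. exp (- cenergy E n)"
  have hs: "(?f has_sum Zc E N) (AN N)"
    using assms by (simp add: Zc_def AN_def)
  obtain F where F: "finite F" "F \<subseteq> AN N" "dist (sum ?f F) (Zc E N) \<le> r/2"
    using has_sum_finite_approximation[OF hs, of "r/2"] r by auto
  define J0 where "J0 = Suc (Max (\<Union>n\<in>F. {j. n j \<noteq> 0}))"
  have fin: "finite (\<Union>n\<in>F. {j. n j \<noteq> 0})"
    using F(1,2) by (auto simp: AN_def configs_def)
  have FC: "F \<subseteq> CJ J N" if "J \<ge> J0" for J
  proof
    fix n assume n: "n \<in> F"
    have z: "n j = 0" if "j \<ge> J" for j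
    proof (rule ccontr)
      assume "n j \<noteq> 0"
      hence "j \<in> (\<Union>n\<in>F. {j. n j \<noteq> 0})" using n by auto
      hence "j \<le> Max (\<Union>n\<in>F. {j. n j \<noteq> 0})" using fin by simp
      thus False using \<open>j \<ge> J\<close> \<open>J \<ge> J0\<close> by (simp add: J0_def)
    qed
    have sup: "{j. n j \<noteq> 0} \<subseteq> {..<J}" using z by (metis (mono_tags) lessThan_iff mem_Collect_eq not_le subsetI)
    have "cnum n = N" using n F(2) by (auto simp: AN_def)
    hence "sum n {..<J} = N" using cnum_eq[OF _ sup] by simp
    thus "n \<in> CJ J N" using z by (simp add: CJ_def)
  qed
  show "\<exists>no. \<forall>J\<ge>no. norm (WJ E J N - Zc E N) < r"
  proof (intro exI allI impI)
    fix J assume J: "J \<ge> J0"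
    have "sum ?f F \<le> WJ E J N"
      unfolding WJ_def by (rule sum_mono2[OF CJ_finite FC[OF J]]) auto
    moreover have "WJ E J N \<le> Zc E N" by (rule WJ_le[OF assms])
    ultimately show "norm (WJ E J N - Zc E N) < r"
      using F(3) r by (simp add: dist_real_def)
  qed
qed

lemma Zc_pos:
  assumes "(\<lambda>n. exp (- cenergy E n)) summable_on AN N"
  shows "Zc E N > 0"
proof -
  have "0 < WJ E (Suc 0) N" by (simp add: WJ_1)
  also have "\<dots> \<le> Zc E N" by (rule WJ_le[OF assms])
  finally show ?thesis .
qed

lemma Zc_lc:
  assumes "\<And>N. (\<lambda>n. exp (- cenergy E n)) summable_on AN N"
  shows "Zc E n * Zc E (n+2) \<le> Zc E (n+1)^2"
proof -
  have l: "(\<lambda>J. WJ E (Suc J) N) \<longlonglongrightarrow> Zc E N" for N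
    using LIMSEQ_Suc[OF WJ_lim[OF assms]] .
  have "(\<lambda>J. WJ E (Suc J) n * WJ E (Suc J) (n+2)) \<longlonglongrightarrow> Zc E n * Zc E (n+2)"
    by (intro tendsto_mult l)
  moreover have "(\<lambda>J. WJ E (Suc J) (n+1)^2) \<longlonglongrightarrow> Zc E (n+1)^2"
    by (intro tendsto_power l)
  ultimately show ?thesis
    by (rule LIMSEQ_le) (use WJ_good in blast)
qed

lemma Zgc_sums:
  assumes "(\<lambda>n. exp (- (cenergy E n - \<mu> * real (cnum n)))) summable_on configs"
    and "\<And>N. (\<lambda>n. exp (- cenergy E n)) summable_on AN N"
  shows "(\<lambda>N. Zc E N * exp (\<mu> * real N)) sums Zgc E \<mu>"
proof -
  let ?g = "\<lambda>n. exp (- (cenergy E n - \<mu> * real (cnum n)))"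
  have h: "(?g has_sum Zgc E \<mu>) configs" using assms(1) by (simp add: Zgc_def)
  have ceq: "configs = snd ` Sigma UNIV AN"
    by (force simp: AN_def)
  have inj: "inj_on snd (Sigma UNIV AN)"
    by (rule inj_onI) (auto simp: AN_def)
  have h2: "((?g \<circ> snd) has_sum Zgc E \<mu>) (Sigma UNIV AN)"
    using h unfolding ceq has_sum_reindex[OF inj] .
  have "((\<lambda>N. Zc E N * exp (\<mu> * real N)) has_sum Zgc E \<mu>) UNIV"
  proof (rule has_sum_SigmaD[OF h2])
    fix N :: nat assume "N \<in> UNIV"
    have "((\<lambda>n. exp (\<mu> * real N) * exp (- cenergy E n)) has_sum (exp (\<mu> * real N) * Zc E N)) (AN N)"
      by (rule has_sum_cmult_right) (use assms(2)[of N] in \<open>simp add: Zc_def AN_def\<close>)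
    moreover have "exp (\<mu> * real N) * exp (- cenergy E n) = (?g \<circ> snd) (N, n)" if "n \<in> AN N" for n
      using that by (simp add: AN_def exp_add[symmetric] algebra_simps)
    ultimately show "((\<lambda>y. (?g \<circ> snd) (N, y)) has_sum Zc E N * exp (\<mu> * real N)) (AN N)"
      by (subst has_sum_cong[symmetric]) (auto simp: mult.commute)
  qed
  thus ?thesis by (rule has_sum_imp_sums)
qed




lemma supp_line:
  fixes F :: "nat \<Rightarrow> real"
  assumes inc: "\<And>k. F (Suc k) - F k \<le> F (Suc (Suc k)) - F (Suc k)"
  shows "F n \<ge> F m + (F (Suc m) - F m) * (real n - real m)"
proof -
  define d where "d k = F (Suc k) - F k" for k
  have "incseq d" unfolding d_def by (rule incseq_SucI) (use inc in auto)
  define c where "c = d m"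
  have up: "F (m + t) \<ge> F m + c * real t" for t
  proof (induction t)
    case 0 thus ?case by simp
  next
    case (Suc t)
    have "d m \<le> d (m + t)" using \<open>incseq d\<close> by (simp add: incseq_def)
    hence "F (m + Suc t) = F (m + t) + d (m + t)" by (simp add: d_def)
    thus ?case using Suc \<open>d m \<le> d (m + t)\<close> by (simp add: c_def algebra_simps)
  qed
  have down: "\<forall>n. n + t = m \<longrightarrow> F n \<ge> F m - c * real t" for t
  proof (induction t)
    case 0 thus ?case by simp
  next
    case (Suc t)
    show ?case
    proof (intro allI impI)
      fix n assume n: "n + Suc t = m"
      have IH: "F (Suc n) \<ge> F m - c * real t" using Suc n by simp
      have "d n \<le> d m" using \<open>incseq d\<close> n by (simp add: incseq_def)
      hence "F n = F (Suc n) - d n" by (simp add: d_def)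
      thus "F n \<ge> F m - c * real (Suc t)" using IH \<open>d n \<le> d m\<close> by (simp add: c_def algebra_simps)
    qed
  qed
  show ?thesis
  proof (cases "m \<le> n")
    case True
    then obtain t where "n = m + t" using le_Suc_ex by blast
    thus ?thesis using up[of t] by (simp add: c_def d_def)
  next
    case False
    then obtain t where "m = n + t" using le_Suc_ex[of n m] by auto
    thus ?thesis using down[of t] by (simp add: c_def d_def algebra_simps)
  qed
qed

theorem corollaryA2:
  fixes E :: "nat \<Rightarrow> real" and \<mu> :: real and Nb :: nat
  assumes "mono E" and "\<And>j. 0 \<le> E j"
    and "\<And>N. (\<lambda>n. exp (- cenergy E n)) summable_on {n \<in> configs. cnum n = N}"
    and "(\<lambda>n. exp (- (cenergy E n - \<mu> * real (cnum n)))) summable_on configs"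
    and "(\<lambda>N. real N * lam E \<mu> N) sums (real Nb)"
  shows "Fc E Nb \<ge> Fgc E \<mu> \<and> Fgc E \<mu> \<ge> Fc E Nb - ln (1 + real Nb) - 1"
proof -
  have S: "\<And>N. (\<lambda>n. exp (- cenergy E n)) summable_on AN N"
    using assms(3) by (simp add: AN_def)
  define Z where "Z = Zgc E \<mu>"
  define L where "L N = lam E \<mu> N" for N
  define m where "m = real Nb"
  define G where "G N = Zc E N * exp (\<mu> * real N)" for N
  have Zpos: "\<And>N. Zc E N > 0" by (rule Zc_pos[OF S])
  have Gpos: "G N > 0" for N using Zpos[of N] by (simp add: G_def)
  have sG: "G sums Z" unfolding G_def Z_def by (rule Zgc_sums[OF assms(4) S])
  have Zp: "Z > 0" using sG Gpos by (metis suminf_pos sums_summable sums_unique)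
  have LG: "L N = G N / Z" for N by (simp add: L_def lam_def G_def Z_def)
  have Lpos: "L N > 0" for N using Gpos Zp by (simp add: LG)
  have Leq: "L = (\<lambda>n. G n / Z)" by (rule ext) (simp add: LG)
  have sL: "L sums 1" using sums_divide[OF sG, of Z] Zp unfolding Leq by simp
  have sNL: "(\<lambda>N. real N * L N) sums m" using assms(5) by (simp add: L_def m_def)
  have Lle1: "L N \<le> 1" for N
  proof -
    have "sum L {N} \<le> suminf L"
      by (rule sum_le_suminf) (use sL Lpos in \<open>auto simp: sums_iff less_imp_le\<close>)
    thus ?thesis using sL by (simp add: sums_iff)
  qed
  have mpos: "m > 0"
  proof -
    have "sum (\<lambda>N. real N * L N) {1} \<le> suminf (\<lambda>N. real N * L N)"
      by (rule sum_le_suminf) (use sNL Lpos in \<open>auto simp: sums_iff less_imp_le\<close>)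
    thus ?thesis using sNL Lpos[of 1] by (simp add: sums_iff)
  qed
  define q where "q = m / (m + 1)"
  have q: "0 < q" "q < 1" using mpos by (auto simp: q_def)
  define g where "g N = q ^ N / (m + 1)" for N
  have gpos: "g N > 0" for N using q mpos by (simp add: g_def)
  have sg: "g sums 1"
  proof -
    have "(\<lambda>N. q ^ N) sums (1 / (1 - q))" by (rule geometric_sums) (use q in auto)
    moreover have "1 / (1 - q) = m + 1" using mpos by (simp add: q_def field_simps)
    ultimately have "(\<lambda>N. q ^ N) sums (m + 1)" by simp
    from sums_divide[OF this, of "m+1"] show ?thesis using mpos unfolding g_def[abs_def] by simp
  qed
  define k where "k N = L N * ln (m + 1) - ln q * (real N * L N) + g N - L N" for N
  have sk0: "k sums (1 * ln (m + 1) - ln q * m + 1 - 1)"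
    unfolding k_def[abs_def]
    by (intro sums_diff sums_add sums_mult sums_mult2 sL sNL sg)
  hence sk: "k sums (ln (m + 1) - ln q * m)" by simp
  have hk: "- (L N * ln (L N)) \<le> k N" for N
  proof -
    have "ln (g N / L N) \<le> g N / L N - 1" by (rule ln_le_minus_one) (use gpos Lpos in auto)
    hence "L N * ln (g N / L N) \<le> L N * (g N / L N - 1)"
      using Lpos[of N] by (intro mult_left_mono) auto
    also have "\<dots> = g N - L N" using Lpos[of N] by (simp add: field_simps)
    finally have a: "L N * (ln (g N) - ln (L N)) \<le> g N - L N"
      using gpos[of N] Lpos[of N] by (simp add: ln_divide_pos)
    have lg: "ln (g N) = real N * ln q - ln (m + 1)"
      using q mpos by (simp add: g_def ln_divide_pos ln_realpow)
    show ?thesis using a unfolding lg k_def by (simp add: algebra_simps)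
  qed
  have h0: "0 \<le> - (L N * ln (L N))" for N
    using Lpos[of N] Lle1[of N] by (simp add: mult_le_0_iff)
  have smh: "summable (\<lambda>N. - (L N * ln (L N)))"
    by (rule summable_comparison_test'[OF sums_summable[OF sk]]) (use h0 hk in auto)
  have smLL: "summable (\<lambda>N. L N * ln (L N))"
    using summable_minus[OF smh] by simp
  have ent: "entropy E \<mu> = (\<Sum>N. - (L N * ln (L N)))"
    by (simp add: entropy_def L_def[symmetric] suminf_minus[OF smLL])
  have entle: "entropy E \<mu> \<le> ln (m + 1) - ln q * m"
    unfolding ent using sums_le[OF hk summable_sums[OF smh] sk] by simp
  have lnq: "- ln q * m \<le> 1"
  proof -
    have "ln ((m+1)/m) \<le> (m+1)/m - 1" by (rule ln_le_minus_one) (use mpos in auto)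
    also have "\<dots> = 1 / m" using mpos by (simp add: field_simps)
    finally have "ln ((m+1)/m) * m \<le> 1" using mpos by (simp add: field_simps)
    moreover have "ln ((m+1)/m) = - ln q" using mpos by (simp add: q_def ln_divide_pos)
    ultimately show ?thesis by simp
  qed
  have entle2: "entropy E \<mu> \<le> ln (1 + m) + 1" using entle lnq by (simp add: add.commute)
  have LF: "L N * Fc E N = \<mu> * (real N * L N) - ln Z * L N - L N * ln (L N)" for N
  proof -
    have ll: "ln (L N) = ln (Zc E N) + \<mu> * real N - ln Z"
      using Zpos[of N] Zp by (simp add: LG G_def ln_divide_pos ln_mult)
    show ?thesis unfolding ll Fc_def by (simp add: algebra_simps)
  qed
  have sLF: "(\<lambda>N. L N * Fc E N) sums (\<mu> * m - ln Z * 1 - (\<Sum>N. L N * ln (L N)))"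
    unfolding LF by (intro sums_diff sums_mult sL sNL summable_sums[OF smLL])
  have Fgc_eq: "Fgc E \<mu> = (\<mu> * m - ln Z * 1 - (\<Sum>N. L N * ln (L N))) - entropy E \<mu>"
    unfolding Fgc_def L_def[symmetric] using sLF by (simp add: sums_iff)
  have Fgc_eq2: "Fgc E \<mu> = \<mu> * m - ln Z"
    unfolding Fgc_eq by (simp add: entropy_def L_def[symmetric])
  have GleZ: "G Nb \<le> Z"
  proof -
    have "sum G {Nb} \<le> suminf G"
      by (rule sum_le_suminf) (use sG Gpos in \<open>auto simp: sums_iff less_imp_le\<close>)
    thus ?thesis using sG by (simp add: sums_iff)
  qed
  have up: "Fc E Nb \<ge> Fgc E \<mu>"
  proof -
    have "ln (G Nb) \<le> ln Z" using GleZ Gpos[of Nb] by simp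
    moreover have "ln (G Nb) = ln (Zc E Nb) + \<mu> * m"
      using Zpos[of Nb] by (simp add: G_def ln_mult m_def)
    ultimately show ?thesis unfolding Fgc_eq2 by (simp add: Fc_def)
  qed
  have conv: "Fc E k' - Fc E k \<le> Fc E (Suc k') - Fc E k'" if "k' = Suc k" for k k'
  proof -
    have "Zc E k * Zc E (k+2) \<le> Zc E (k+1)^2" by (rule Zc_lc[OF S])
    hence "ln (Zc E k * Zc E (k+2)) \<le> ln (Zc E (k+1)^2)"
      using Zpos[of k] Zpos[of "k+2"] by (intro ln_mono) auto
    hence "ln (Zc E k) + ln (Zc E (k+2)) \<le> 2 * ln (Zc E (k+1))"
      using Zpos[of k] Zpos[of "k+2"] Zpos[of "k+1"] by (simp add: ln_mult ln_realpow)
    thus ?thesis using that by (simp add: Fc_def)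
  qed
  define c where "c = Fc E (Suc Nb) - Fc E Nb"
  have sl: "Fc E N \<ge> Fc E Nb + c * (real N - m)" for N
    unfolding c_def m_def by (rule supp_line) (use conv in auto)
  have sR: "(\<lambda>N. Fc E Nb * L N + c * (real N * L N) - c * m * L N) sums (Fc E Nb * 1 + c * m - c * m * 1)"
    by (intro sums_diff sums_add sums_mult sL sNL)
  have "Fc E Nb * 1 + c * m - c * m * 1 \<le> \<mu> * m - ln Z * 1 - (\<Sum>N. L N * ln (L N))"
  proof (rule sums_le[OF _ sR sLF])
    fix N
    have "L N * (Fc E Nb + c * (real N - m)) \<le> L N * Fc E N"
      using sl[of N] Lpos[of N] by (intro mult_left_mono) auto
    thus "Fc E Nb * L N + c * (real N * L N) - c * m * L N \<le> L N * Fc E N"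
      by (simp add: algebra_simps)
  qed
  hence low: "Fgc E \<mu> \<ge> Fc E Nb - entropy E \<mu>"
    unfolding Fgc_eq by simp
  show ?thesis using up low entle2 by (simp add: m_def)
qed


end
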